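(* Under the standing setup, assume that $f$ is bounded, i.e. $\sup_{q\in\mathcal P}\|f_q\|_\infty<\infty$. Then there exists a constant $L>0$ such that $\|\mathscr S(t)u_0-u_0\|_\infty\le Lt\|u_0\|_\infty$ for all $t\ge0$ and $u_0\in\mathbb R^d$.
   Context: Standing setup: $d\in\mathbb N$; vectors in $\mathbb R^d$ with $\|u\|_\infty=\max_i|u_i|$; inequalities and suprema of vectors are componentwise; reals are identified with constant vectors. A $Q$-matrix is $q\in\mathbb R^{d\times d}$ with $q_{ii}\le0$, $q_{ij}\ge0$ ($i\ne j$), $\sum_jq_{ij}=0$. Let $\mathcal P$ be a set of $Q$-matrices and $f=(f_q)_{q\in\mathcal P}\subset\mathbb R^d$ with $\sup_{q\in\mathcal P}f_q=f_{q_0}=0$ for some $q_0\in\mathcal P$, such that $\mathcal Qu:=\sup_{q\in\mathcal P}(qu+f_q)$ is finite for every $u\in\mathbb R^d$. For $q\in\mathcal P$, $t\ge0$: $S_q(t)u_0:=e^{tq}u_0+\int_0^te^{sq}f_q\,ds$. For $h\ge0$: $\mathcal E_hu_0:=\sup_{q\in\mathcal P}S_q(h)u_0$. $P$ is the set of finite subsets $\pi\subset[0,\infty)$ with $0\in\pi$; $P_t:=\{\pi\in P:\max\pi=t\}$. For $\pi=\{t_0,\dots,t_m\}$ with $0=t_0<\dots<t_m$, $m\ge1$, $\mathcal E_\pi:=\mathcal E_{t_1-t_0}\circ\cdots\circ\mathcal E_{t_m-t_{m-1}}$, and $\mathcal E_{\{0\}}:=\mathcal E_0$. The Nisio semigroup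 of $(\mathcal P,f)$ is $\mathscr S(t)u_0:=\sup_{\pi\in P_t}\mathcal E_\pi u_0$. *)

theory Defs
  imports "HOL-Analysis.Analysis"
begin

definition supnorm :: "real^'d \<Rightarrow> real" where
  "supnorm u = Max (range (\<lambda>i. \<bar>u $ i\<bar>))"

definition is_Qmatrix :: "real^'d^'d \<Rightarrow> bool" where
  "is_Qmatrix q \<longleftrightarrow> (\<forall>i. q $ i $ i \<le> 0) \<and> (\<forall>i j. i \<noteq> j \<longrightarrow> q $ i $ j \<ge> 0)
      \<and> (\<forall>i. (\<Sum>j\<in>UNIV. q $ i $ j) = 0)"

primrec matpow :: "real^'d^'d \<Rightarrow> nat \<Rightarrow> real^'d^'d" where
  "matpow q 0 = mat 1"
| "matpow q (Suc n) = q ** matpow q n"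

definition mexp :: "real \<Rightarrow> real^'d^'d \<Rightarrow> real^'d^'d" where
  "mexp t q = (\<Sum>n. (t ^ n / fact n) *\<^sub>R matpow q n)"

definition Sq :: "(real^'d^'d \<Rightarrow> real^'d) \<Rightarrow> real^'d^'d \<Rightarrow> real \<Rightarrow> real^'d \<Rightarrow> real^'d" where
  "Sq f q t u0 = mexp t q *v u0 + integral {0..t} (\<lambda>s. mexp s q *v f q)"

definition Eh :: "(real^'d^'d) set \<Rightarrow> (real^'d^'d \<Rightarrow> real^'d) \<Rightarrow> real \<Rightarrow> real^'d \<Rightarrow> real^'d" where
  "Eh P f h u0 = (\<chi> i. SUP q\<in>P. Sq f q h u0 $ i)"

fun Elist :: "(real^'d^'d) set \<Rightarrow> (real^'d^'d \<Rightarrow> real^'d) \<Rightarrow> real list \<Rightarrow> real^'d \<Rightarrow> real^'d" where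
  "Elist P f (a # b # rest) u = Eh P f (b - a) (Elist P f (b # rest) u)"
| "Elist P f _ u = u"

definition Epi :: "(real^'d^'d) set \<Rightarrow> (real^'d^'d \<Rightarrow> real^'d) \<Rightarrow> real set \<Rightarrow> real^'d \<Rightarrow> real^'d" where
  "Epi P f \<pi> u = (if \<pi> = {0} then Eh P f 0 u else Elist P f (sorted_list_of_set \<pi>) u)"

definition partitions :: "real \<Rightarrow> real set set" where
  "partitions t = {\<pi>. finite \<pi> \<and> \<pi> \<subseteq> {0..} \<and> 0 \<in> \<pi> \<and> Max \<pi> = t}"

definition Nisio :: "(real^'d^'d) set \<Rightarrow> (real^'d^'d \<Rightarrow> real^'d) \<Rightarrow> real \<Rightarrow> real^'d \<Rightarrow> real^'d" where
  "Nisio P f t u0 = (\<chi> i. SUP \<pi>\<in>partitions t. Epi P f \<pi> u0 $ i)"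

end

theory Submission
  imports Defs
begin

lemma matpow_entry_bound:
  fixes q :: "real^'d^'d"
  assumes C: "\<And>i j. \<bar>q$i$j\<bar> \<le> C"
  shows "\<bar>matpow q n $ i $ j\<bar> \<le> (real CARD('d) * C)^n"
proof (induction n arbitrary: i j)
  case 0
  then show ?case by (simp add: mat_def)
next
  case (Suc n)
  have "\<bar>matpow q (Suc n) $ i $ j\<bar> = \<bar>\<Sum>k\<in>UNIV. q$i$k * matpow q n $k$j\<bar>"
    by (simp add: matrix_matrix_mult_def)
  also have "\<dots> \<le> (\<Sum>k\<in>UNIV. \<bar>q$i$k * matpow q n $k$j\<bar>)" by (rule sum_abs)
  also have "\<dots> \<le> (\<Sum>k\<in>(UNIV::'d set). C * (real CARD('d) * C)^n)"
    apply (rule sum_mono) unfolding abs_mult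
    apply (rule mult_mono) using C Suc.IH by (auto intro: order_trans[OF abs_ge_zero C])
  also have "\<dots> = (real CARD('d) * C)^Suc n" by simp
  finally show ?case .
qed

lemma mexp_summable:
  fixes q :: "real^'d^'d"
  shows "summable (\<lambda>n. (t ^ n / fact n) *\<^sub>R matpow q n)"
proof -
  define C where "C = (\<Sum>i\<in>UNIV. \<Sum>j\<in>UNIV. \<bar>q$i$j\<bar>)"
  have C: "\<bar>q$i$j\<bar> \<le> C" for i j
  proof -
    have "\<bar>q$i$j\<bar> \<le> (\<Sum>j\<in>UNIV. \<bar>q$i$j\<bar>)"
      by (rule member_le_sum) auto
    also have "\<dots> \<le> C" unfolding C_def
      by (rule member_le_sum[where f="\<lambda>i. \<Sum>j\<in>UNIV. \<bar>q$i$j\<bar>"]) (auto intro: sum_nonneg)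
    finally show ?thesis .
  qed
  let ?D = "real CARD('d) * C"
  have nm: "norm (matpow q n) \<le> real CARD('d) * real CARD('d) * ?D^n" for n
  proof -
    have "norm (matpow q n) \<le> (\<Sum>i\<in>UNIV. norm (matpow q n $ i))"
      unfolding norm_vec_def by (rule L2_set_le_sum) auto
    also have "\<dots> \<le> (\<Sum>i\<in>(UNIV::'d set). real CARD('d) * ?D^n)"
    proof (rule sum_mono)
      fix i
      have "norm (matpow q n $ i) \<le> (\<Sum>j\<in>UNIV. \<bar>matpow q n $ i $ j\<bar>)" by (rule norm_le_l1_cart)
      also have "\<dots> \<le> (\<Sum>j\<in>(UNIV::'d set). ?D^n)"
        by (rule sum_mono) (rule matpow_entry_bound[OF C])
      finally show "norm (matpow q n $ i) \<le> real CARD('d) * ?D^n" by simp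
    qed
    finally show ?thesis by simp
  qed
  have "summable (\<lambda>n. real CARD('d) * real CARD('d) * (inverse (fact n) * (\<bar>t\<bar> * ?D)^n))"
    by (intro summable_mult summable_exp)
  then show ?thesis
  proof (rule summable_comparison_test'[where N=0])
    fix n :: nat
    have "norm ((t ^ n / fact n) *\<^sub>R matpow q n) = (\<bar>t\<bar>^n / fact n) * norm (matpow q n)"
      by (simp add: power_abs)
    also have "\<dots> \<le> (\<bar>t\<bar>^n / fact n) * (real CARD('d) * real CARD('d) * ?D^n)"
      by (rule mult_left_mono[OF nm]) auto
    also have "\<dots> = real CARD('d) * real CARD('d) * (inverse (fact n) * (\<bar>t\<bar> * ?D)^n)"
      by (simp add: power_mult_distrib field_simps)
    finally show "norm ((t ^ n / fact n) *\<^sub>R matpow q n) \<le> \<dots>" .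
  qed
qed

lemma mexp_nth:
  fixes q :: "real^'d^'d"
  shows "(\<lambda>n. t ^ n / fact n * matpow q n $ i $ j) sums (mexp t q $ i $ j)"
  using sums_vec_nth[OF sums_vec_nth[OF summable_sums[OF mexp_summable[of t q]]], of i j]
  by (simp add: mexp_def)


lemma matpow_rowsum:
  fixes q :: "real^'d^'d"
  assumes "is_Qmatrix q"
  shows "(\<Sum>j\<in>UNIV. matpow q n $ i $ j) = (if n = 0 then 1 else 0)"
proof (induction n arbitrary: i)
  case 0
  then show ?case by (simp add: mat_def)
next
  case (Suc n)
  have "(\<Sum>j\<in>UNIV. matpow q (Suc n) $ i $ j) = (\<Sum>j\<in>UNIV. \<Sum>k\<in>UNIV. q$i$k * matpow q n $k$j)"
    by (simp add: matrix_matrix_mult_def)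
  also have "\<dots> = (\<Sum>k\<in>UNIV. q$i$k * (\<Sum>j\<in>UNIV. matpow q n $k$j))"
    by (subst sum.swap) (simp add: sum_distrib_left)
  also have "\<dots> = (\<Sum>k\<in>UNIV. q$i$k) * (if n = 0 then 1 else 0)"
    by (simp add: Suc.IH sum_distrib_right)
  also have "\<dots> = 0" using assms by (simp add: is_Qmatrix_def)
  finally show ?case by simp
qed

lemma mexp_rowsum:
  fixes q :: "real^'d^'d"
  assumes "is_Qmatrix q"
  shows "(\<Sum>j\<in>UNIV. mexp t q $ i $ j) = 1"
proof -
  have "(\<lambda>n. \<Sum>j\<in>UNIV. t ^ n / fact n * matpow q n $ i $ j) sums (\<Sum>j\<in>UNIV. mexp t q $ i $ j)"
    by (rule sums_sum) (rule mexp_nth)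
  moreover have "(\<lambda>n. \<Sum>j\<in>UNIV. t ^ n / fact n * matpow q n $ i $ j) = (\<lambda>n. if n = 0 then 1 else 0)"
  proof -
    have "(\<lambda>n. \<Sum>j\<in>UNIV. t ^ n / fact n * matpow q n $ i $ j) = (\<lambda>n. t ^ n / fact n * (\<Sum>j\<in>UNIV. matpow q n $ i $ j))"
      by (simp only: sum_distrib_left)
    then show ?thesis by (auto simp: matpow_rowsum[OF assms])
  qed
  ultimately show ?thesis using sums_single[of 0 "\<lambda>_. 1::real"] sums_unique2 by fastforce
qed

lemma binom_step:
  fixes M :: "nat \<Rightarrow> 'a::real_vector" and a :: real
  shows "(\<Sum>k\<le>n. (of_nat (n choose k) * a^(n-k)) *\<^sub>R M (Suc k))
       + a *\<^sub>R (\<Sum>k\<le>n. (of_nat (n choose k) * a^(n-k)) *\<^sub>R M k)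
       = (\<Sum>k\<le>Suc n. (of_nat (Suc n choose k) * a^(Suc n-k)) *\<^sub>R M k)"
proof -
  have 1: "a *\<^sub>R (\<Sum>k\<le>n. (of_nat (n choose k) * a^(n-k)) *\<^sub>R M k)
      = (\<Sum>k\<le>Suc n. (of_nat (n choose k) * a^(Suc n-k)) *\<^sub>R M k)"
  proof -
    have "a *\<^sub>R (\<Sum>k\<le>n. (of_nat (n choose k) * a^(n-k)) *\<^sub>R M k)
        = (\<Sum>k\<le>n. (of_nat (n choose k) * a^(Suc n-k)) *\<^sub>R M k)"
      by (auto simp: scaleR_sum_right Suc_diff_le intro!: sum.cong)
    also have "\<dots> = (\<Sum>k\<le>Suc n. (of_nat (n choose k) * a^(Suc n-k)) *\<^sub>R M k)"
      by simp
    finally show ?thesis .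
  qed
  have 2: "(\<Sum>k\<le>Suc n. (of_nat (n choose k) * a^(Suc n-k)) *\<^sub>R M k)
     = a^(Suc n) *\<^sub>R M 0 + (\<Sum>k\<le>n. (of_nat (n choose Suc k) * a^(n-k)) *\<^sub>R M (Suc k))"
    by (subst sum.atMost_Suc_shift) simp
  have 3: "(\<Sum>k\<le>Suc n. (of_nat (Suc n choose k) * a^(Suc n-k)) *\<^sub>R M k)
     = a^(Suc n) *\<^sub>R M 0 + (\<Sum>k\<le>n. (of_nat (n choose k) * a^(n-k)) *\<^sub>R M (Suc k))
        + (\<Sum>k\<le>n. (of_nat (n choose Suc k) * a^(n-k)) *\<^sub>R M (Suc k))"
    by (subst sum.atMost_Suc_shift) (simp add: algebra_simps sum.distrib)
  show ?thesis using 1 2 3 by (simp add: algebra_simps)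
qed

lemma mat_mult_sum_right:
  fixes A :: "real^'d^'d"
  shows "A ** (\<Sum>k\<in>K. c k *\<^sub>R B k) = (\<Sum>k\<in>K. c k *\<^sub>R (A ** B k))"
  by (simp add: vec_eq_iff matrix_matrix_mult_def sum_component sum_distrib_left
      sum_distrib_right mult_ac) (subst sum.swap, simp)

lemma matpow_binom:
  fixes N :: "real^'d^'d"
  shows "matpow (N + a *\<^sub>R mat 1) n = (\<Sum>k\<le>n. (of_nat (n choose k) * a^(n-k)) *\<^sub>R matpow N k)"
proof (induction n)
  case 0
  then show ?case by simp
next
  case (Suc n)
  have e: "(N + a *\<^sub>R mat 1) ** X = N ** X + a *\<^sub>R X" for X :: "real^'d^'d"
  proof -
    have "(N + a *\<^sub>R mat 1) ** X = N ** X + (a *\<^sub>R mat 1) ** X"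
      by (simp add: vec_eq_iff matrix_matrix_mult_def sum.distrib distrib_right)
    also have "(a *\<^sub>R mat 1) ** X = a *\<^sub>R X" by (simp add: scalar_matrix_assoc[symmetric])
    finally show ?thesis .
  qed
  have "matpow (N + a *\<^sub>R mat 1) (Suc n) = (N + a *\<^sub>R mat 1) ** matpow (N + a *\<^sub>R mat 1) n"
    by simp
  also have "\<dots> = N ** (\<Sum>k\<le>n. (of_nat (n choose k) * a^(n-k)) *\<^sub>R matpow N k)
     + a *\<^sub>R (\<Sum>k\<le>n. (of_nat (n choose k) * a^(n-k)) *\<^sub>R matpow N k)"
    by (simp only: e Suc.IH)
  also have "\<dots> = (\<Sum>k\<le>n. (of_nat (n choose k) * a^(n-k)) *\<^sub>R matpow N (Suc k))
     + a *\<^sub>R (\<Sum>k\<le>n. (of_nat (n choose k) * a^(n-k)) *\<^sub>R matpow N k)"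
    by (simp only: mat_mult_sum_right matpow.simps)
  also have "\<dots> = (\<Sum>k\<le>Suc n. (of_nat (Suc n choose k) * a^(Suc n-k)) *\<^sub>R matpow N k)"
    by (rule binom_step)
  finally show ?case .
qed


lemma mexp_nonneg:
  fixes q :: "real^'d^'d"
  assumes Q: "is_Qmatrix q" and s: "s \<ge> 0"
  shows "mexp s q $ i $ j \<ge> 0"
proof -
  define c where "c = (\<Sum>i\<in>UNIV. \<bar>q$i$i\<bar>)"
  have ci: "\<bar>q$i$i\<bar> \<le> c" for i unfolding c_def by (rule member_le_sum) auto
  define N where "N = q + c *\<^sub>R mat 1"
  have qN: "q = N + (- c) *\<^sub>R mat 1" unfolding N_def by simp
  have Nnn: "N $ i $ j \<ge> 0" for i j
    using Q ci[of i] unfolding N_def is_Qmatrix_def by (auto simp: mat_def)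
  have Npow: "matpow N k $ i $ j \<ge> 0" for k i j
  proof (induction k arbitrary: i j)
    case 0 then show ?case by (simp add: mat_def)
  next
    case (Suc k) then show ?case
      by (simp add: matrix_matrix_mult_def sum_nonneg Nnn)
  qed
  define A where "A k = s^k / fact k * matpow N k $ i $ j" for k
  define B where "B m = (- c * s)^m / fact m" for m
  have A0: "A k \<ge> 0" for k unfolding A_def using s Npow by simp
  have sA: "A sums mexp s N $ i $ j" unfolding A_def by (rule mexp_nth)
  have sB: "B sums exp (- c * s)" unfolding B_def using exp_converges[of "- c * s"] by (simp add: divide_inverse mult.commute)
  have nA: "summable (\<lambda>k. norm (A k))" using sA A0 by (simp add: sums_summable)
  have nB: "summable (\<lambda>k. norm (B k))"
    using summable_exp[of "\<bar>- c * s\<bar>"] unfolding B_def by (simp add: abs_mult power_abs divide_inverse mult.commute)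
  have terms: "s ^ n / fact n * matpow q n $ i $ j = (\<Sum>k\<le>n. A k * B (n - k))" for n
  proof -
    have "matpow q n $ i $ j = (\<Sum>k\<le>n. (of_nat (n choose k) * (- c)^(n-k)) * matpow N k $ i $ j)"
      unfolding qN matpow_binom by (simp add: sum_component)
    then have "s ^ n / fact n * matpow q n $ i $ j
       = (\<Sum>k\<le>n. s ^ n / fact n * (of_nat (n choose k) * (- c)^(n-k)) * matpow N k $ i $ j)"
      by (simp add: sum_distrib_left mult.assoc)
    also have "\<dots> = (\<Sum>k\<le>n. A k * B (n - k))"
    proof (rule sum.cong[OF refl])
      fix k assume "k \<in> {..n}"
      then have kn: "k \<le> n" by simp
      have sn: "s^n = s^k * s^(n-k)" using kn by (simp add: power_add[symmetric])
      have bf: "real (n choose k) = fact n / (fact k * fact (n - k))" using kn by (rule binomial_fact)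
      have pw: "(- c * s)^(n-k) = (- c)^(n-k) * s^(n-k)" by (metis mult_minus_left power_mult_distrib)
      show "s ^ n / fact n * (of_nat (n choose k) * (- c)^(n-k)) * matpow N k $ i $ j = A k * B (n - k)"
        unfolding A_def B_def sn bf pw by (simp add: field_simps)
    qed
    finally show ?thesis .
  qed
  have "(\<lambda>n. \<Sum>k\<le>n. A k * B (n - k)) sums (suminf A * suminf B)"
    by (rule Cauchy_product_sums[OF nA nB])
  then have "(\<lambda>n. s ^ n / fact n * matpow q n $ i $ j) sums (suminf A * suminf B)"
    by (simp only: terms)
  then have "mexp s q $ i $ j = suminf A * suminf B" using mexp_nth sums_unique2 by blast
  also have "\<dots> \<ge> 0"
  proof (rule mult_nonneg_nonneg)
    show "suminf A \<ge> 0" using sA A0 by (intro suminf_nonneg) (auto simp: sums_iff)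
    show "suminf B \<ge> 0" using sB by (simp add: sums_iff)
  qed
  finally show ?thesis .
qed


lemma mexp_near_id:
  fixes q :: "real^'d^'d"
  assumes C: "\<And>i j. \<bar>q$i$j\<bar> \<le> C" and h: "0 \<le> h" "h \<le> 1"
  shows "\<bar>mexp h q $ i $ j - mat 1 $ i $ j\<bar> \<le> h * exp (real CARD('d) * C)"
proof -
  let ?D = "real CARD('d) * C"
  define g where "g n = h ^ n / fact n * matpow q n $ i $ j - (if n = 0 then mat 1 $ i $ j else 0)" for n
  have sg: "g sums (mexp h q $ i $ j - mat 1 $ i $ j)"
    unfolding g_def by (rule sums_diff[OF mexp_nth sums_single])
  have gb: "norm (g n) \<le> h * (?D ^ n / fact n)" for n
  proof (cases n)
    case 0 then show ?thesis using h by (simp add: g_def)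
  next
    case (Suc m)
    have "norm (g n) = h ^ n / fact n * \<bar>matpow q n $ i $ j\<bar>"
      using h by (simp add: g_def Suc abs_mult)
    also have "\<dots> \<le> h ^ n / fact n * ?D ^ n"
      by (rule mult_left_mono[OF matpow_entry_bound[OF C]]) (use h in simp)
    also have "\<dots> \<le> h / fact n * ?D ^ n"
    proof (rule mult_right_mono)
      have "h ^ n \<le> h ^ 1" using h Suc by (intro power_decreasing) auto
      then show "h ^ n / fact n \<le> h / fact n" by (simp add: divide_right_mono)
      show "0 \<le> ?D ^ n" using order_trans[OF abs_ge_zero C] by simp
    qed
    finally show ?thesis by simp
  qed
  have se: "(\<lambda>n. h * (?D ^ n / fact n)) sums (h * exp ?D)"
    using sums_mult[OF exp_converges[of ?D], of h] by (simp add: divide_inverse mult.commute)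
  have "norm (suminf g) \<le> (\<Sum>n. h * (?D ^ n / fact n))"
    by (rule norm_suminf_le[OF gb]) (use se in \<open>simp add: sums_iff\<close>)
  then show ?thesis using sg se by (simp add: sums_iff)
qed

lemma supnorm_ge: "\<bar>u $ i\<bar> \<le> supnorm (u::real^'d)"
  unfolding supnorm_def by (rule Max_ge) auto

lemma supnorm_le: "(\<And>i. \<bar>u $ i\<bar> \<le> c) \<Longrightarrow> supnorm (u::real^'d) \<le> c"
  unfolding supnorm_def by (subst Max_le_iff) auto

lemma mexp_vec_upper:
  fixes q :: "real^'d^'d"
  assumes Q: "is_Qmatrix q" and h: "0 \<le> h" and le: "\<And>j. v $ j \<le> w $ j + c"
  shows "(mexp h q *v v) $ i \<le> (mexp h q *v w) $ i + c"
proof -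
  have "(mexp h q *v v) $ i = (\<Sum>j\<in>UNIV. mexp h q $ i $ j * v $ j)"
    by (simp add: matrix_vector_mult_def)
  also have "\<dots> \<le> (\<Sum>j\<in>UNIV. mexp h q $ i $ j * (w $ j + c))"
    by (rule sum_mono, rule mult_left_mono[OF le mexp_nonneg[OF Q h]])
  also have "\<dots> = (\<Sum>j\<in>UNIV. mexp h q $ i $ j * w $ j) + c * (\<Sum>j\<in>UNIV. mexp h q $ i $ j)"
    by (simp add: sum_distrib_left algebra_simps sum.distrib)
  also have "\<dots> = (mexp h q *v w) $ i + c"
    by (simp add: matrix_vector_mult_def mexp_rowsum[OF Q])
  finally show ?thesis .
qed

lemma mexp_vec_lower:
  fixes q :: "real^'d^'d"
  assumes Q: "is_Qmatrix q" and h: "0 \<le> h" and le: "\<And>j. w $ j - c \<le> v $ j"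
  shows "(mexp h q *v w) $ i - c \<le> (mexp h q *v v) $ i"
proof -
  have "(mexp h q *v w) $ i - c = (\<Sum>j\<in>UNIV. mexp h q $ i $ j * w $ j) - c * (\<Sum>j\<in>UNIV. mexp h q $ i $ j)"
    by (simp add: matrix_vector_mult_def mexp_rowsum[OF Q])
  also have "\<dots> = (\<Sum>j\<in>UNIV. mexp h q $ i $ j * (w $ j - c))"
    by (simp add: sum_distrib_left algebra_simps sum_subtractf)
  also have "\<dots> \<le> (\<Sum>j\<in>UNIV. mexp h q $ i $ j * v $ j)"
    by (rule sum_mono, rule mult_left_mono[OF le mexp_nonneg[OF Q h]])
  also have "\<dots> = (mexp h q *v v) $ i"
    by (simp add: matrix_vector_mult_def)
  finally show ?thesis .
qed

lemma mexp_vec_abs: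
  fixes q :: "real^'d^'d"
  assumes Q: "is_Qmatrix q" and h: "0 \<le> h"
  shows "\<bar>(mexp h q *v v) $ i\<bar> \<le> supnorm v"
proof -
  have "(mexp h q *v v) $ i \<le> (mexp h q *v 0) $ i + supnorm v"
  proof (rule mexp_vec_upper[OF Q h])
    fix j show "v $ j \<le> 0 $ j + supnorm v" using supnorm_ge[of v j] by simp
  qed
  moreover have "(mexp h q *v 0) $ i - supnorm v \<le> (mexp h q *v v) $ i"
  proof (rule mexp_vec_lower[OF Q h])
    fix j show "0 $ j - supnorm v \<le> v $ j" using supnorm_ge[of v j] by simp
  qed
  ultimately show ?thesis by auto
qed

definition Kc :: "'d itself \<Rightarrow> real \<Rightarrow> real" where
  "Kc _ C = max 2 (real CARD('d) * exp (real CARD('d) * C))"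

lemma mexp_vec_near:
  fixes q :: "real^'d^'d"
  assumes Q: "is_Qmatrix q" and C: "\<And>i j. \<bar>q$i$j\<bar> \<le> C" and h: "0 \<le> h"
  shows "\<bar>(mexp h q *v u) $ i - u $ i\<bar> \<le> Kc TYPE('d) C * h * supnorm u"
proof (cases "h \<le> 1")
  case True
  have "(mexp h q *v u) $ i - u $ i = (\<Sum>j\<in>UNIV. (mexp h q $ i $ j - mat 1 $ i $ j) * u $ j)"
  proof -
    have "u $ i = (mat 1 *v u) $ i" by simp
    also have "\<dots> = (\<Sum>j\<in>UNIV. mat 1 $ i $ j * u $ j)" unfolding matrix_vector_mult_def by simp
    finally show ?thesis by (simp add: matrix_vector_mult_def left_diff_distrib sum_subtractf)
  qed
  also have "\<bar>\<dots>\<bar> \<le> (\<Sum>j\<in>UNIV. \<bar>(mexp h q $ i $ j - mat 1 $ i $ j) * u $ j\<bar>)" by (rule sum_abs)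
  also have "\<dots> \<le> (\<Sum>j\<in>(UNIV::'d set). h * exp (real CARD('d) * C) * supnorm u)"
    unfolding abs_mult
    by (rule sum_mono, rule mult_mono[OF mexp_near_id[OF C h True] supnorm_ge]) (use h in auto)
  also have "\<dots> = real CARD('d) * exp (real CARD('d) * C) * h * supnorm u" by simp
  also have "\<dots> \<le> Kc TYPE('d) C * h * supnorm u"
    unfolding Kc_def
    by (intro mult_right_mono) (use h order_trans[OF abs_ge_zero supnorm_ge] in auto)
  finally show ?thesis .
next
  case False
  have "\<bar>(mexp h q *v u) $ i - u $ i\<bar> \<le> \<bar>(mexp h q *v u) $ i\<bar> + \<bar>u $ i\<bar>" by linarith
  also have "\<dots> \<le> 2 * supnorm u" using mexp_vec_abs[OF Q h, of u i] supnorm_ge[of u i] by linarith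
  also have "\<dots> \<le> Kc TYPE('d) C * h * supnorm u"
  proof -
    have sn: "supnorm u \<ge> 0" using order_trans[OF abs_ge_zero supnorm_ge] by blast
    have "2 \<le> Kc TYPE('d) C * h" unfolding Kc_def using False
      by (smt (verit, ccfv_SIG) max.cobounded1 mult_le_cancel_left1)
    then show ?thesis using sn by (simp add: mult_right_mono)
  qed
  finally show ?thesis .
qed

lemma Kc_pos: "Kc TYPE('d) C > 0" unfolding Kc_def by simp


lemma integral_nonpos:
  fixes q :: "real^'d^'d"
  assumes Q: "is_Qmatrix q" and fn: "\<And>j. fq $ j \<le> 0"
  shows "integral {0..h} (\<lambda>s. mexp s q *v fq) $ i \<le> 0"
proof (cases "(\<lambda>s. mexp s q *v fq) integrable_on {0..h}")
  case True
  have "integral {0..h} (\<lambda>s. mexp s q *v fq) \<bullet> axis i 1 \<le> 0"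
  proof (rule has_integral_component_neg[OF _ integrable_integral[OF True]])
    show "axis i (1::real) \<in> Basis" by simp
    fix s :: real assume "s \<in> {0..h}"
    then have s: "s \<ge> 0" by simp
    have "(mexp s q *v fq) $ i = (\<Sum>j\<in>UNIV. mexp s q $ i $ j * fq $ j)"
      by (simp add: matrix_vector_mult_def)
    also have "\<dots> \<le> 0"
      by (rule sum_nonpos) (simp add: mult_nonneg_nonpos mexp_nonneg[OF Q s] fn)
    finally show "(mexp s q *v fq) \<bullet> axis i 1 \<le> 0" by (simp add: cart_eq_inner_axis[symmetric])
  qed
  then show ?thesis by (simp add: cart_eq_inner_axis)
next
  case False
  then show ?thesis by (simp add: not_integrable_integral)
qed

lemma Sq_le:
  assumes Q: "is_Qmatrix q" and fn: "\<And>j. f q $ j \<le> 0"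
  shows "Sq f q h v $ i \<le> (mexp h q *v v) $ i"
  using integral_nonpos[OF Q fn, of h i] by (simp add: Sq_def)

lemma Sq_zero:
  assumes "f q = 0"
  shows "Sq f q h v = mexp h q *v v"
  using assms by (simp add: Sq_def)

context
  fixes P :: "(real^'d^'d) set" and f :: "real^'d^'d \<Rightarrow> real^'d" and q0 :: "real^'d^'d" and C :: real
  assumes Q: "\<forall>q\<in>P. is_Qmatrix q"
    and q0: "q0 \<in> P"
    and fneg: "\<forall>q\<in>P. \<forall>i. f q $ i \<le> 0"
    and f0: "f q0 = 0"
    and CB: "\<forall>q\<in>P. \<forall>i j. \<bar>q$i$j\<bar> \<le> C"
begin

lemma Eh_bdd: "h \<ge> 0 \<Longrightarrow> bdd_above ((\<lambda>q. Sq f q h v $ i) ` P)"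
proof (rule bdd_aboveI2)
  fix q assume "h \<ge> 0" "q \<in> P"
  then show "Sq f q h v $ i \<le> supnorm v"
    using Sq_le[of q f h v i] mexp_vec_abs[of q h v i] Q fneg by fastforce
qed

lemma Eh_upper:
  assumes h: "h \<ge> 0" and le: "\<And>j. v $ j \<le> w $ j + c"
  shows "Eh P f h v $ i \<le> w $ i + Kc TYPE('d) C * h * supnorm w + c"
  unfolding Eh_def vec_lambda_beta
proof (rule cSUP_least)
  show "P \<noteq> {}" using q0 by auto
  fix q assume q: "q \<in> P"
  have Qq: "is_Qmatrix q" using Q q by auto
  have "Sq f q h v $ i \<le> (mexp h q *v v) $ i" using Sq_le[OF Qq] fneg q by auto
  also have "\<dots> \<le> (mexp h q *v w) $ i + c" by (rule mexp_vec_upper[OF Qq h le])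
  also have "\<dots> \<le> w $ i + Kc TYPE('d) C * h * supnorm w + c"
    using mexp_vec_near[OF Qq _ h, of C w i] CB q by (auto simp: abs_le_iff)
  finally show "Sq f q h v $ i \<le> w $ i + Kc TYPE('d) C * h * supnorm w + c" .
qed

lemma Eh_lower:
  assumes h: "h \<ge> 0" and le: "\<And>j. w $ j - c \<le> v $ j"
  shows "w $ i - Kc TYPE('d) C * h * supnorm w - c \<le> Eh P f h v $ i"
  unfolding Eh_def vec_lambda_beta
proof (rule cSUP_upper2[OF Eh_bdd[OF h] q0])
  have Qq: "is_Qmatrix q0" using Q q0 by auto
  have "w $ i - Kc TYPE('d) C * h * supnorm w - c \<le> (mexp h q0 *v w) $ i - c"
    using mexp_vec_near[OF Qq _ h, of C w i] CB q0 by (auto simp: abs_le_iff)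
  also have "\<dots> \<le> (mexp h q0 *v v) $ i" by (rule mexp_vec_lower[OF Qq h le])
  also have "\<dots> = Sq f q0 h v $ i" by (simp add: Sq_zero[of f q0, OF f0])
  finally show "w $ i - Kc TYPE('d) C * h * supnorm w - c \<le> Sq f q0 h v $ i" .
qed

lemma Elist_bound:
  assumes "sorted xs" "xs \<noteq> []"
  shows "\<bar>Elist P f xs u $ i - u $ i\<bar> \<le> Kc TYPE('d) C * (last xs - hd xs) * supnorm u"
  using assms
proof (induction xs arbitrary: i)
  case Nil then show ?case by simp
next
  case (Cons a ys)
  show ?case
  proof (cases ys)
    case Nil then show ?thesis by simp
  next
    case (Cons b rest)
    let ?K = "Kc TYPE('d) C"
    have sys: "sorted ys" using Cons.prems by simp
    have ab: "a \<le> b" using Cons.prems Cons by simp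
    let ?c = "?K * (last ys - b) * supnorm u"
    have IH: "\<bar>Elist P f ys u $ j - u $ j\<bar> \<le> ?c" for j
      using Cons.IH[OF sys] Cons by simp
    have e: "Elist P f (a # ys) u = Eh P f (b - a) (Elist P f ys u)" using Cons by simp
    have up: "Eh P f (b - a) (Elist P f ys u) $ i \<le> u $ i + ?K * (b - a) * supnorm u + ?c"
    proof (rule Eh_upper)
      show "0 \<le> b - a" using ab by simp
      fix j show "Elist P f ys u $ j \<le> u $ j + ?c" using IH[of j] by (simp add: abs_le_iff)
    qed
    have lo: "u $ i - ?K * (b - a) * supnorm u - ?c \<le> Eh P f (b - a) (Elist P f ys u) $ i"
    proof (rule Eh_lower)
      show "0 \<le> b - a" using ab by simp
      fix j show "u $ j - ?c \<le> Elist P f ys u $ j" using IH[of j] by (simp add: abs_le_iff)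
    qed
    have "?K * (b - a) * supnorm u + ?c = ?K * (last (a # ys) - hd (a # ys)) * supnorm u"
      using Cons by (simp add: algebra_simps)
    then show ?thesis using up lo e by (auto simp: abs_le_iff)
  qed
qed

lemma Epi_bound:
  assumes pi: "\<pi> \<in> partitions t"
  shows "\<bar>Epi P f \<pi> u $ i - u $ i\<bar> \<le> Kc TYPE('d) C * t * supnorm u"
proof -
  let ?K = "Kc TYPE('d) C"
  have fin: "finite \<pi>" and nn: "\<pi> \<subseteq> {0..}" and z: "0 \<in> \<pi>" and mx: "Max \<pi> = t"
    using pi by (auto simp: partitions_def)
  have snn: "supnorm u \<ge> 0" using order_trans[OF abs_ge_zero supnorm_ge] by blast
  show ?thesis
  proof (cases "\<pi> = {0}")
    case True
    have t0: "t = 0" using mx True by simp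
    have up: "Eh P f 0 u $ i \<le> u $ i + ?K * 0 * supnorm u + 0" by (rule Eh_upper) auto
    have lo: "u $ i - ?K * 0 * supnorm u - 0 \<le> Eh P f 0 u $ i" by (rule Eh_lower) auto
    show ?thesis using up lo True t0 by (simp add: Epi_def)
  next
    case False
    define xs where "xs = sorted_list_of_set \<pi>"
    have sx: "set xs = \<pi>" "sorted xs" using fin by (auto simp: xs_def)
    have ne: "xs \<noteq> []" using sx z by auto
    have "last xs \<in> \<pi>" using sx ne by (metis last_in_set)
    then have l: "last xs \<le> t" using fin mx by (metis Max_ge)
    have "hd xs \<in> \<pi>" using sx ne by (metis hd_in_set)
    then have h: "hd xs \<ge> 0" using nn by auto
    have "\<bar>Epi P f \<pi> u $ i - u $ i\<bar> \<le> ?K * (last xs - hd xs) * supnorm u"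
      using Elist_bound[OF sx(2) ne, of u i] False by (simp add: Epi_def xs_def)
    also have "\<dots> \<le> ?K * t * supnorm u"
      using l h snn Kc_pos[where 'd='d and C=C] by (intro mult_right_mono mult_left_mono) auto
    finally show ?thesis .
  qed
qed

lemma Nisio_bound:
  assumes t: "t \<ge> 0"
  shows "supnorm (Nisio P f t u - u) \<le> Kc TYPE('d) C * t * supnorm u"
proof (rule supnorm_le)
  fix i
  let ?B = "Kc TYPE('d) C * t * supnorm u"
  have pt: "{0, t} \<in> partitions t" using t by (auto simp: partitions_def)
  have ub: "Epi P f \<pi> u $ i \<le> u $ i + ?B" if "\<pi> \<in> partitions t" for \<pi>
    using Epi_bound[OF that, of u i] by (auto simp: abs_le_iff)
  have up: "Nisio P f t u $ i \<le> u $ i + ?B"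
    unfolding Nisio_def vec_lambda_beta by (rule cSUP_least) (use pt ub in auto)
  have bdd: "bdd_above ((\<lambda>\<pi>. Epi P f \<pi> u $ i) ` partitions t)"
    using ub by (intro bdd_aboveI2) auto
  have lo: "u $ i - ?B \<le> Nisio P f t u $ i"
    unfolding Nisio_def vec_lambda_beta
    by (rule cSUP_upper2[OF bdd pt]) (use Epi_bound[OF pt, of u i] in \<open>auto simp: abs_le_iff\<close>)
  show "\<bar>(Nisio P f t u - u) $ i\<bar> \<le> ?B" using up lo by (auto simp: abs_le_iff)
qed

end


theorem mainTheorem13:
  fixes P :: "(real^'d^'d) set" and f :: "real^'d^'d \<Rightarrow> real^'d" and q0 :: "real^'d^'d"
  assumes Q: "\<forall>q\<in>P. is_Qmatrix q"
    and q0: "q0 \<in> P"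
    and fsup: "\<forall>q\<in>P. \<forall>i. f q $ i \<le> f q0 $ i"
    and f0: "f q0 = 0"
    and finite_gen: "\<forall>u i. bdd_above ((\<lambda>q. (q *v u + f q) $ i) ` P)"
    and fbdd: "bdd_above ((\<lambda>q. supnorm (f q)) ` P)"
  shows "\<exists>L>0. \<forall>t\<ge>0. \<forall>u0. supnorm (Nisio P f t u0 - u0) \<le> L * t * supnorm u0"
proof -
  have fneg: "\<forall>q\<in>P. \<forall>i. f q $ i \<le> 0" using fsup f0 by auto
  obtain F where F: "\<And>q. q \<in> P \<Longrightarrow> supnorm (f q) \<le> F" using fbdd by (auto simp: bdd_above_def)
  define B where "B i j = (SUP q\<in>P. (q *v axis j 1 + f q) $ i)" for i j
  have ax: "(q *v axis j 1) $ i = q $ i $ j" for q :: "real^'d^'d" and i j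
    by (simp add: matrix_vector_mult_def axis_def if_distrib if_distribR sum.delta' cong: if_cong)
  have qub: "q $ i $ j \<le> \<bar>B i j\<bar> + \<bar>F\<bar>" if q: "q \<in> P" for q i j
  proof -
    have "(q *v axis j 1 + f q) $ i \<le> B i j" unfolding B_def
      by (rule cSUP_upper[OF q]) (rule finite_gen[rule_format])
    moreover have "- F \<le> f q $ i" using F[OF q] supnorm_ge[of "f q" i] by (auto simp: abs_le_iff)
    ultimately show ?thesis using ax[of q j i] by auto
  qed
  define C where "C = (\<Sum>i\<in>UNIV. \<Sum>j\<in>UNIV. \<bar>B i j\<bar> + \<bar>F\<bar>)"
  have rowC: "(\<Sum>j\<in>UNIV. \<bar>B i j\<bar> + \<bar>F\<bar>) \<le> C" for i
    unfolding C_def by (rule member_le_sum[where f="\<lambda>i. \<Sum>j\<in>UNIV. \<bar>B i j\<bar> + \<bar>F\<bar>"]) (auto intro: sum_nonneg)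
  have elC: "\<bar>B i j\<bar> + \<bar>F\<bar> \<le> C" for i j
    using member_le_sum[of j UNIV "\<lambda>j. \<bar>B i j\<bar> + \<bar>F\<bar>"] rowC[of i] by auto
  have CB: "\<forall>q\<in>P. \<forall>i j. \<bar>q$i$j\<bar> \<le> C"
  proof (intro ballI allI)
    fix q i j assume q: "q \<in> P"
    have Qq: "is_Qmatrix q" using Q q by auto
    show "\<bar>q$i$j\<bar> \<le> C"
    proof (cases "i = j")
      case False
      then have "q$i$j \<ge> 0" using Qq by (auto simp: is_Qmatrix_def)
      then show ?thesis using qub[OF q, of i j] elC[of i j] by auto
    next
      case True
      have rs: "(\<Sum>k\<in>UNIV. q$i$k) = 0" using Qq by (auto simp: is_Qmatrix_def)
      have "(\<Sum>k\<in>UNIV. q$i$k) = q$i$i + (\<Sum>k\<in>UNIV - {i}. q$i$k)"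
        by (simp add: sum.remove)
      then have "- q$i$i = (\<Sum>k\<in>UNIV - {i}. q$i$k)" using rs by simp
      also have "\<dots> \<le> (\<Sum>k\<in>UNIV - {i}. \<bar>B i k\<bar> + \<bar>F\<bar>)"
        by (rule sum_mono) (rule qub[OF q])
      also have "\<dots> \<le> (\<Sum>k\<in>UNIV. \<bar>B i k\<bar> + \<bar>F\<bar>)"
        by (rule sum_mono2) auto
      also have "\<dots> \<le> C" by (rule rowC)
      finally have "- q$i$i \<le> C" .
      moreover have "q$i$i \<le> 0" using Qq by (auto simp: is_Qmatrix_def)
      ultimately show ?thesis using True by auto
    qed
  qed
  show ?thesis
    using Nisio_bound[OF Q q0 fneg f0 CB] Kc_pos[where 'd='d and C=C] by blast
qed


end
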